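(* If TDS is undecidable, then the $<$-universality problem and the $<$-inclusion problem of discounted-sum automata over infinite words are undecidable.
   Context: An instance of TDS consists of a rational discount factor $0<\lambda<1$, a rational target $t$, and rational weights $a,b$; it asks whether there exists $w\in\{a,b\}^\omega$ with $\sum_{i=0}^\infty w(i)\lambda^i=t$. A discounted-sum automaton (DSA) over infinite words is a tuple $\langle\Sigma,Q,q_{in},\delta,\gamma,\lambda\rangle$ with finite alphabet $\Sigma$, finite state set $Q$, initial state $q_{in}$, transition relation $\delta\subseteq Q\times\Sigma\times Q$, weight function $\gamma:\delta\to\mathbb Q$ and rational discount factor $0<\lambda<1$. A run on an infinite word $\sigma_1\sigma_2\cdots$ is $q_0,\sigma_1,q_1,\sigma_2,\dots$ with $q_0=q_{in}$ and $(q_i,\sigma_{i+1},q_{i+1})\in\delta$; every infinite run is accepting; its value is $\sum_{i=0}^\infty\lambda^i\gamma(q_i,\sigma_{i+1},q_{i+1})$, and $\mathcal A(w)$ is the infimum of the values of runs on $w$. The $<$-universality problem asks, given $\mathcal A$ and $t\in\mathbb Q$, whether $\mathcal A(w)<t$ for every infinite word $w$; the $<$-inclusion problem asks, given $\mathcal A,\mathcal B$, whether $\mathcal A(w)<\mathcal B(w)$ for every infinite word $w$. *)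

theory Defs
  imports Complex_Main "HOL-Library.Nat_Bijection" "HOL-Library.Extended_Real"
begin

datatype recf = Zero | Succ | Proj nat | Comp recf "recf list" | Prec recf recf | Mu recf

inductive recf_eval :: "recf \<Rightarrow> nat list \<Rightarrow> nat \<Rightarrow> bool" where
  zero: "recf_eval Zero xs 0"
| succ: "recf_eval Succ (x # xs) (Suc x)"
| proj: "i < length xs \<Longrightarrow> recf_eval (Proj i) xs (xs ! i)"
| comp: "length ys = length gs \<Longrightarrow> (\<forall>i < length gs. recf_eval (gs ! i) xs (ys ! i))
          \<Longrightarrow> recf_eval f ys z \<Longrightarrow> recf_eval (Comp f gs) xs z"
| prec0: "recf_eval f xs y \<Longrightarrow> recf_eval (Prec f g) (0 # xs) y"
| precS: "recf_eval (Prec f g) (n # xs) y \<Longrightarrow> recf_eval g (n # y # xs) z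
          \<Longrightarrow> recf_eval (Prec f g) (Suc n # xs) z"
| mu: "recf_eval f (n # xs) 0 \<Longrightarrow> (\<forall>m < n. \<exists>y. recf_eval f (m # xs) (Suc y))
          \<Longrightarrow> recf_eval (Mu f) xs n"

definition decidable :: "(nat \<Rightarrow> bool) \<Rightarrow> bool" where
  "decidable P \<longleftrightarrow> (\<exists>f. \<forall>n. recf_eval f [n] (if P n then 1 else 0))"

definition enc_rat :: "rat \<Rightarrow> nat" where
  "enc_rat q = prod_encode (int_encode (fst (quotient_of q)), nat (snd (quotient_of q)))"

definition enc_tds :: "rat \<Rightarrow> rat \<Rightarrow> rat \<Rightarrow> rat \<Rightarrow> nat" where
  "enc_tds lam t a b = list_encode [enc_rat lam, enc_rat t, enc_rat a, enc_rat b]"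

definition TDS :: "nat \<Rightarrow> bool" where
  "TDS n \<longleftrightarrow> (\<exists>lam t a b. n = enc_tds lam t a b \<and> 0 < lam \<and> lam < 1 \<and>
      (\<exists>w :: nat \<Rightarrow> rat. (\<forall>i. w i \<in> {a, b}) \<and>
         (\<lambda>i. real_of_rat (w i) * real_of_rat lam ^ i) sums real_of_rat t))"

text \<open>States are 0..<nstates, letters are 0..<nletters; the transition relation
together with the weight function is a list of ((p, a, q), weight) with distinct
transitions.\<close>
record dsa =
  nstates :: nat
  nletters :: nat
  init :: nat
  trans :: "((nat \<times> nat \<times> nat) \<times> rat) list"
  disc :: rat

definition wf_dsa :: "dsa \<Rightarrow> bool" where
  "wf_dsa A \<longleftrightarrow> init A < nstates A \<and> 0 < disc A \<and> disc A < 1 \<and>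
     distinct (map fst (trans A)) \<and>
     (\<forall>((p, s, q), c) \<in> set (trans A). p < nstates A \<and> s < nletters A \<and> q < nstates A)"

definition delta :: "dsa \<Rightarrow> (nat \<times> nat \<times> nat) set" where
  "delta A = fst ` set (trans A)"

definition gamma :: "dsa \<Rightarrow> nat \<times> nat \<times> nat \<Rightarrow> rat" where
  "gamma A e = the (map_of (trans A) e)"

definition is_word :: "dsa \<Rightarrow> (nat \<Rightarrow> nat) \<Rightarrow> bool" where
  "is_word A w \<longleftrightarrow> (\<forall>i. w i < nletters A)"

text \<open>r is a run on the word w (letter w i is read in step i, i.e. w i is sigma_(i+1)).\<close>
definition is_run :: "dsa \<Rightarrow> (nat \<Rightarrow> nat) \<Rightarrow> (nat \<Rightarrow> nat) \<Rightarrow> bool" where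
  "is_run A w r \<longleftrightarrow> r 0 = init A \<and> (\<forall>i. (r i, w i, r (Suc i)) \<in> delta A)"

definition run_value :: "dsa \<Rightarrow> (nat \<Rightarrow> nat) \<Rightarrow> (nat \<Rightarrow> nat) \<Rightarrow> real" where
  "run_value A w r = (\<Sum>i. real_of_rat (disc A) ^ i * real_of_rat (gamma A (r i, w i, r (Suc i))))"

text \<open>A(w): infimum of the run values (infimum of the empty set is +infinity).\<close>
definition dsa_val :: "dsa \<Rightarrow> (nat \<Rightarrow> nat) \<Rightarrow> ereal" where
  "dsa_val A w = (INF r \<in> {r. is_run A w r}. ereal (run_value A w r))"

definition enc_dsa :: "dsa \<Rightarrow> nat" where
  "enc_dsa A = list_encode [nstates A, nletters A, init A,
     list_encode (map (\<lambda>((p, s, q), c). list_encode [p, s, q, enc_rat c]) (trans A)),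
     enc_rat (disc A)]"

definition LT_UNIV :: "nat \<Rightarrow> bool" where
  "LT_UNIV n \<longleftrightarrow> (\<exists>A t. wf_dsa A \<and> n = prod_encode (enc_dsa A, enc_rat t) \<and>
      (\<forall>w. is_word A w \<longrightarrow> dsa_val A w < ereal (real_of_rat t)))"

definition LT_INCL :: "nat \<Rightarrow> bool" where
  "LT_INCL n \<longleftrightarrow> (\<exists>A B. wf_dsa A \<and> wf_dsa B \<and> nletters A = nletters B \<and>
      n = prod_encode (enc_dsa A, enc_dsa B) \<and>
      (\<forall>w. is_word A w \<longrightarrow> dsa_val A w < dsa_val B w))"

end

theory Submission
  imports Defs
begin


definition rf1 :: "(nat \<Rightarrow> nat) \<Rightarrow> bool" where
  "rf1 f \<longleftrightarrow> (\<exists>r. \<forall>x. recf_eval r [x] (f x))"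
definition rf2 :: "(nat \<Rightarrow> nat \<Rightarrow> nat) \<Rightarrow> bool" where
  "rf2 f \<longleftrightarrow> (\<exists>r. \<forall>x y. recf_eval r [x, y] (f x y))"

lemma rf1I: "(\<And>x. recf_eval r [x] (f x)) \<Longrightarrow> rf1 f" unfolding rf1_def by blast
lemma rf2I: "(\<And>x y. recf_eval r [x, y] (f x y)) \<Longrightarrow> rf2 f" unfolding rf2_def by blast

lemma comp1_eval: "recf_eval g xs y \<Longrightarrow> recf_eval f [y] z \<Longrightarrow> recf_eval (Comp f [g]) xs z"
  by (rule recf_eval.comp[where ys="[y]"]) auto
lemma comp2_eval: "recf_eval g1 xs y1 \<Longrightarrow> recf_eval g2 xs y2 \<Longrightarrow> recf_eval f [y1, y2] z
   \<Longrightarrow> recf_eval (Comp f [g1, g2]) xs z"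
  by (rule recf_eval.comp[where ys="[y1, y2]"]) (auto simp: less_Suc_eq nth_Cons')

lemma proj0: "recf_eval (Proj 0) (x # xs) x" using recf_eval.proj[of 0 "x#xs"] by simp
lemma proj1: "recf_eval (Proj 1) (x # y # xs) y" using recf_eval.proj[of 1 "x#y#xs"] by simp
lemma proj1': "recf_eval (Proj (Suc 0)) (x # y # xs) y" using proj1 by simp
lemma proj2: "recf_eval (Proj 2) (x # y # z # xs) z" using recf_eval.proj[of 2 "x#y#z#xs"] by simp

lemma rf1_id: "rf1 (\<lambda>x. x)" by (rule rf1I[where r="Proj 0"]) (rule proj0)
lemma rf2_fst: "rf2 (\<lambda>x y. x)" by (rule rf2I[where r="Proj 0"]) (rule proj0)
lemma rf2_snd: "rf2 (\<lambda>x y. y)" by (rule rf2I[where r="Proj 1"]) (rule proj1)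

lemma const_eval: "recf_eval (((\<lambda>g. Comp Succ [g]) ^^ c) Zero) xs c"
proof (induction c)
  case 0 then show ?case by (simp add: recf_eval.zero)
next
  case (Suc c)
  then show ?case using comp1_eval[OF Suc recf_eval.succ[of c "[]"]] by simp
qed
lemma rf1_const: "rf1 (\<lambda>x. c)" by (rule rf1I) (rule const_eval)

lemma rf1_comp: "rf1 f \<Longrightarrow> rf1 g \<Longrightarrow> rf1 (\<lambda>x. f (g x))"
proof -
  assume "rf1 f" "rf1 g"
  then obtain rf rg where rf: "\<And>x. recf_eval rf [x] (f x)" and rg: "\<And>x. recf_eval rg [x] (g x)"
    unfolding rf1_def by blast
  show ?thesis by (rule rf1I[where r="Comp rf [rg]"]) (rule comp1_eval[OF rg rf])
qed
lemma rf1_comp2: "rf2 f \<Longrightarrow> rf1 g \<Longrightarrow> rf1 h \<Longrightarrow> rf1 (\<lambda>x. f (g x) (h x))"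
proof -
  assume "rf2 f" "rf1 g" "rf1 h"
  then obtain rf rg rh where rf: "\<And>x y. recf_eval rf [x, y] (f x y)"
    and rg: "\<And>x. recf_eval rg [x] (g x)" and rh: "\<And>x. recf_eval rh [x] (h x)"
    unfolding rf1_def rf2_def by blast
  show ?thesis by (rule rf1I[where r="Comp rf [rg, rh]"]) (rule comp2_eval[OF rg rh rf])
qed
lemma rf2_comp1: "rf1 f \<Longrightarrow> rf2 g \<Longrightarrow> rf2 (\<lambda>x y. f (g x y))"
proof -
  assume "rf1 f" "rf2 g"
  then obtain rf rg where rf: "\<And>x. recf_eval rf [x] (f x)" and rg: "\<And>x y. recf_eval rg [x, y] (g x y)"
    unfolding rf1_def rf2_def by blast
  show ?thesis by (rule rf2I[where r="Comp rf [rg]"]) (rule comp1_eval[OF rg rf])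
qed
lemma rf2_comp2: "rf2 f \<Longrightarrow> rf2 g \<Longrightarrow> rf2 h \<Longrightarrow> rf2 (\<lambda>x y. f (g x y) (h x y))"
proof -
  assume "rf2 f" "rf2 g" "rf2 h"
  then obtain rf rg rh where rf: "\<And>x y. recf_eval rf [x, y] (f x y)"
    and rg: "\<And>x y. recf_eval rg [x, y] (g x y)" and rh: "\<And>x y. recf_eval rh [x, y] (h x y)"
    unfolding rf2_def by blast
  show ?thesis by (rule rf2I[where r="Comp rf [rg, rh]"]) (rule comp2_eval[OF rg rh rf])
qed
lemma rf2_const: "rf2 (\<lambda>x y. c)"
  using rf2_comp1[OF rf1_const rf2_fst] .
lemma rf2_lift1: "rf1 f \<Longrightarrow> rf2 (\<lambda>x y. f x)" using rf2_comp1[OF _ rf2_fst] .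
lemma rf2_lift2: "rf1 f \<Longrightarrow> rf2 (\<lambda>x y. f y)" using rf2_comp1[OF _ rf2_snd] .

definition "ADD = Prec (Proj 0) (Comp Succ [Proj 1])"
lemma add_eval: "recf_eval ADD [n, x] (n + x)"
proof (induction n)
  case 0 show ?case unfolding ADD_def using recf_eval.prec0[OF proj0] by simp
next
  case (Suc n)
  show ?case unfolding ADD_def
    by (rule recf_eval.precS[OF Suc[unfolded ADD_def]])
       (auto intro!: comp1_eval proj1 proj1' recf_eval.succ)
qed
lemma rf2_add: "rf2 (+)" by (rule rf2I) (rule add_eval)

definition "MULT = Prec Zero (Comp ADD [Proj 1, Proj 2])"
lemma mult_eval: "recf_eval MULT [n, x] (n * x)"
proof (induction n)
  case 0 show ?case unfolding MULT_def using recf_eval.prec0[OF recf_eval.zero] by simp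
next
  case (Suc n)
  show ?case unfolding MULT_def
    by (rule recf_eval.precS[OF Suc[unfolded MULT_def]])
       (rule comp2_eval[OF proj1 proj2], use add_eval[of "n*x" x] in \<open>simp add: add.commute\<close>)
qed
lemma rf2_mult: "rf2 (*)" by (rule rf2I) (rule mult_eval)

definition "PRED = Prec Zero (Proj 0)"
lemma pred_eval: "recf_eval PRED [n] (n - 1)"
proof (induction n)
  case 0 then show ?case unfolding PRED_def using recf_eval.prec0[OF recf_eval.zero] by simp
next
  case (Suc n)
  show ?case unfolding PRED_def
    by (rule recf_eval.precS[OF Suc[unfolded PRED_def]]) (simp add: proj0)
qed
definition "MONUS = Prec (Proj 0) (Comp PRED [Proj 1])"
lemma monus_eval: "recf_eval MONUS [n, x] (x - n)"
proof (induction n)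
  case 0 show ?case unfolding MONUS_def using recf_eval.prec0[OF proj0] by simp
next
  case (Suc n)
  show ?case unfolding MONUS_def
    by (rule recf_eval.precS[OF Suc[unfolded MONUS_def]])
       (rule comp1_eval[OF proj1], use pred_eval[of "x-n"] in simp)
qed
lemma rf2_monus: "rf2 (\<lambda>n x. x - n)" by (rule rf2I) (rule monus_eval)
lemma rf2_minus: "rf2 (-)"
  using rf2_comp2[OF rf2_monus rf2_snd rf2_fst] .

lemma rf1_mu:
  assumes "rf2 (\<lambda>m x. if Q m x then 0 else 1)" and "\<And>x. \<exists>m. Q m x"
  shows "rf1 (\<lambda>x. LEAST m. Q m x)"
proof -
  from assms(1) obtain r where r: "\<And>m x. recf_eval r [m, x] (if Q m x then 0 else 1)"
    unfolding rf2_def by blast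
  show ?thesis
  proof (rule rf1I[where r="Mu r"])
    fix x
    have q: "Q (LEAST m. Q m x) x" using assms(2) by (metis LeastI)
    show "recf_eval (Mu r) [x] (LEAST m. Q m x)"
    proof (rule recf_eval.mu)
      show "recf_eval r [LEAST m. Q m x, x] 0" using r[of "LEAST m. Q m x" x] q by simp
      show "\<forall>m<LEAST m. Q m x. \<exists>y. recf_eval r [m, x] (Suc y)"
      proof (intro allI impI)
        fix m assume "m < (LEAST m. Q m x)"
        then have "\<not> Q m x" by (rule not_less_Least)
        then show "\<exists>y. recf_eval r [m, x] (Suc y)" using r[of m x] by auto
      qed
    qed
  qed
qed



datatype ex = X | Y | K nat | Plus ex ex | Minus ex ex | Times ex ex | Ap "nat \<Rightarrow> nat" ex

fun ev :: "ex \<Rightarrow> nat \<Rightarrow> nat \<Rightarrow> nat" where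
  "ev X x y = x"
| "ev Y x y = y"
| "ev (K c) x y = c"
| "ev (Plus a b) x y = ev a x y + ev b x y"
| "ev (Minus a b) x y = ev a x y - ev b x y"
| "ev (Times a b) x y = ev a x y * ev b x y"
| "ev (Ap f a) x y = f (ev a x y)"

fun okx :: "ex \<Rightarrow> bool" where
  "okx (Plus a b) = (okx a \<and> okx b)"
| "okx (Minus a b) = (okx a \<and> okx b)"
| "okx (Times a b) = (okx a \<and> okx b)"
| "okx (Ap f a) = (rf1 f \<and> okx a)"
| "okx _ = True"

lemma rf2_ev: "okx e \<Longrightarrow> rf2 (ev e)"
proof (induction e)
  case X then show ?case using rf2_fst by simp
next
  case Y then show ?case using rf2_snd by simp
next
  case (K c) then show ?case using rf2_const by simp
next
  case (Plus a b) then show ?case using rf2_comp2[OF rf2_add, of "ev a" "ev b"] by simp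
next
  case (Minus a b) then show ?case using rf2_comp2[OF rf2_minus, of "ev a" "ev b"] by simp
next
  case (Times a b) then show ?case using rf2_comp2[OF rf2_mult, of "ev a" "ev b"] by simp
next
  case (Ap f a) then show ?case using rf2_comp1[of f "ev a"] by simp
qed

lemma rf2_by_ev: "okx e \<Longrightarrow> (\<And>x y. F x y = ev e x y) \<Longrightarrow> rf2 F"
proof -
  assume "okx e" "\<And>x y. F x y = ev e x y"
  then have "F = ev e" by (intro ext) simp
  with rf2_ev[OF \<open>okx e\<close>] show ?thesis by simp
qed

lemma rf1_by_ev: "okx e \<Longrightarrow> (\<And>x. F x = ev e x x) \<Longrightarrow> rf1 F"
proof -
  assume "okx e" "\<And>x. F x = ev e x x"
  then have "F = (\<lambda>x. ev e x x)" by (intro ext) simp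
  with rf1_comp2[OF rf2_ev[OF \<open>okx e\<close>] rf1_id rf1_id] show ?thesis by simp
qed

lemma rf1_mu_ev:
  assumes "okx e" "\<And>m x. ev e m x = (if Q m x then 0 else 1)" "\<And>x. \<exists>m. Q m x"
  shows "rf1 (\<lambda>x. LEAST m. Q m x)"
  by (rule rf1_mu[OF rf2_by_ev[OF assms(1)] assms(3)]) (use assms(2) in simp)

definition "ISZ a = Minus (K 1) a"
definition "SG a = Minus (K 1) (Minus (K 1) a)"
definition "EQ a b = ISZ (Plus (Minus a b) (Minus b a))"
definition "LT a b = SG (Minus b a)"

lemma ev_ISZ[simp]: "ev (ISZ a) x y = (if ev a x y = 0 then 1 else 0)" by (simp add: ISZ_def)
lemma ev_SG[simp]: "ev (SG a) x y = (if ev a x y = 0 then 0 else 1)" by (simp add: SG_def)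
lemma ev_EQ[simp]: "ev (EQ a b) x y = (if ev a x y = ev b x y then 1 else 0)" by (simp add: EQ_def)
lemma ev_LT[simp]: "ev (LT a b) x y = (if ev a x y < ev b x y then 1 else 0)" by (simp add: LT_def)
lemma okx_ind[simp]: "okx (ISZ a) = okx a" "okx (SG a) = okx a" "okx (EQ a b) = (okx a \<and> okx b)"
   "okx (LT a b) = (okx a \<and> okx b)"
  by (auto simp: ISZ_def SG_def EQ_def LT_def)

definition "TRI = Prec Zero (Comp ADD [Proj 1, Comp Succ [Proj 0]])"
lemma tri_eval: "recf_eval TRI [n] (triangle n)"
proof (induction n)
  case 0 show ?case unfolding TRI_def using recf_eval.prec0[OF recf_eval.zero] by simp
next
  case (Suc n)
  have "recf_eval (Comp Succ [Proj 0]) [n, triangle n] (Suc n)"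
    by (rule comp1_eval[OF proj0 recf_eval.succ[of n "[]"]])
  then have "recf_eval (Comp ADD [Proj 1, Comp Succ [Proj 0]]) [n, triangle n] (triangle n + Suc n)"
    by (rule comp2_eval[OF proj1 _ add_eval])
  then have "recf_eval (Comp ADD [Proj 1, Comp Succ [Proj 0]]) [n, triangle n] (triangle (Suc n))"
    by (simp add: triangle_Suc)
  then show ?case unfolding TRI_def
    by (rule recf_eval.precS[OF Suc[unfolded TRI_def]])
qed
lemma rf1_tri: "rf1 triangle" by (rule rf1I) (rule tri_eval)



section \<open>Pair decoding\<close>

definition pdS :: "nat \<Rightarrow> nat" where "pdS m = (LEAST s. m < triangle (Suc s))"

lemma triangle_ge: "n \<le> triangle n" by (induction n) auto
lemma triangle_mono: "a \<le> b \<Longrightarrow> triangle a \<le> triangle b"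
  by (induction b) (auto simp: le_Suc_eq)

lemma pdS_props: "triangle (pdS m) \<le> m \<and> m < triangle (Suc (pdS m))"
proof -
  have ex: "m < triangle (Suc m)" using triangle_ge[of "Suc m"] by simp
  have 1: "m < triangle (Suc (pdS m))" unfolding pdS_def by (rule LeastI[of _ m]) (rule ex)
  have 2: "triangle (pdS m) \<le> m"
  proof (cases "pdS m")
    case 0 then show ?thesis by simp
  next
    case (Suc s)
    then have "s < pdS m" by simp
    then have "\<not> m < triangle (Suc s)" unfolding pdS_def by (rule not_less_Least)
    with Suc show ?thesis by simp
  qed
  from 1 2 show ?thesis by simp
qed

lemma prod_decode_pdS: "prod_decode m = (m - triangle (pdS m), pdS m - (m - triangle (pdS m)))"
proof -
  let ?s = "pdS m"
  let ?a = "m - triangle ?s"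
  have le: "?a \<le> ?s" using pdS_props[of m] unfolding triangle_Suc by linarith
  have "prod_encode (?a, ?s - ?a) = m"
    using le pdS_props[of m] by (simp add: prod_encode_def)
  then show ?thesis by (metis prod_encode_inverse)
qed

lemma rf1_pdS: "rf1 pdS"
  unfolding pdS_def
  by (rule rf1_mu_ev[where e="ISZ (LT Y (Ap triangle (Plus X (K 1))))"]) 
     (auto simp: rf1_tri, metis le_imp_less_Suc less_add_Suc2 triangle_ge add.commute)

definition pd1 :: "nat \<Rightarrow> nat" where "pd1 m = fst (prod_decode m)"
definition pd2 :: "nat \<Rightarrow> nat" where "pd2 m = snd (prod_decode m)"

lemma rf1_pd1: "rf1 pd1"
  by (rule rf1_by_ev[where e="Minus X (Ap triangle (Ap pdS X))"])
     (auto simp: rf1_tri rf1_pdS pd1_def prod_decode_pdS)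
lemma rf1_pd2: "rf1 pd2"
  by (rule rf1_by_ev[where e="Minus (Ap pdS X) (Minus X (Ap triangle (Ap pdS X)))"])
     (auto simp: rf1_tri rf1_pdS pd2_def prod_decode_pdS)

lemma pd_encode[simp]: "pd1 (prod_encode (a, b)) = a" "pd2 (prod_encode (a, b)) = b"
  by (simp_all add: pd1_def pd2_def)
lemma pd_decode: "prod_encode (pd1 m, pd2 m) = m"
  by (simp add: pd1_def pd2_def)

lemma rf2_pe: "rf2 (\<lambda>a b. prod_encode (a, b))"
  by (rule rf2_by_ev[where e="Plus (Ap triangle (Plus X Y)) X"])
     (auto simp: rf1_tri prod_encode_def)

lemma half_least: "(LEAST h. k < 2 * h + 2) = k div (2::nat)"
  by (rule Least_equality) auto

lemma rf1_half: "rf1 (\<lambda>k. k div 2)"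
proof -
  have "rf1 (\<lambda>k. LEAST h. k < 2 * h + 2)"
    by (rule rf1_mu_ev[where e="ISZ (LT Y (Plus (Times (K 2) X) (K 2)))"])
       (auto, presburger)
  then show ?thesis by (simp only: half_least)
qed

definition PP :: "nat \<Rightarrow> nat" where "PP k = (if even k then k div 2 else 0)"
definition NN :: "nat \<Rightarrow> nat" where "NN k = (if even k then 0 else k div 2 + 1)"

lemma mod2_expr: "k - 2 * (k div 2) = k mod (2::nat)"
  by (simp add: minus_mult_div_eq_mod)

lemma rf1_PP: "rf1 PP"
proof (rule rf1_by_ev[where e="Times (Minus (K 1) (Minus X (Times (K 2) (Ap (\<lambda>k. k div 2) X)))) (Ap (\<lambda>k. k div 2) X)"])
  show "okx (Times (Minus (K 1) (Minus X (Times (K 2) (Ap (\<lambda>k. k div 2) X)))) (Ap (\<lambda>k. k div 2) X))"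
    by (simp add: rf1_half)
  fix x
  show "PP x = ev (Times (Minus (K 1) (Minus X (Times (K 2) (Ap (\<lambda>k. k div 2) X)))) (Ap (\<lambda>k. k div 2) X)) x x"
  proof -
    have m: "x mod 2 = (if even x then 0 else 1)" by presburger
    show ?thesis by (simp add: mod2_expr m PP_def)
  qed
qed
lemma rf1_NN: "rf1 NN"
proof (rule rf1_by_ev[where e="Times (Minus X (Times (K 2) (Ap (\<lambda>k. k div 2) X))) (Plus (Ap (\<lambda>k. k div 2) X) (K 1))"])
  show "okx (Times (Minus X (Times (K 2) (Ap (\<lambda>k. k div 2) X))) (Plus (Ap (\<lambda>k. k div 2) X) (K 1)))"
    by (simp add: rf1_half)
  fix x
  show "NN x = ev (Times (Minus X (Times (K 2) (Ap (\<lambda>k. k div 2) X))) (Plus (Ap (\<lambda>k. k div 2) X) (K 1))) x x"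
  proof -
    have m: "x mod 2 = (if even x then 0 else 1)" by presburger
    show ?thesis by (simp add: mod2_expr m NN_def)
  qed
qed

lemma int_decode_PN: "int_decode k = int (PP k) - int (NN k)"
  by (cases "even k") (simp_all add: int_decode_def sum_decode_def PP_def NN_def)



definition normQ :: "nat \<Rightarrow> nat \<Rightarrow> nat \<Rightarrow> nat \<Rightarrow> bool" where
  "normQ xp xn D m \<longleftrightarrow> 0 < pd2 m \<and>
     PP (pd1 m) * max D 1 + xn * pd2 m = NN (pd1 m) * max D 1 + xp * pd2 m"

definition normq :: "nat \<Rightarrow> nat \<Rightarrow> nat \<Rightarrow> nat" where
  "normq xp xn D = (LEAST m. normQ xp xn D m)"

lemma normQ_int: "normQ xp xn D m \<longleftrightarrow> 0 < pd2 m \<and>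
   int_decode (pd1 m) * int (max D 1) = (int xp - int xn) * int (pd2 m)"
proof -
  have "PP (pd1 m) * max D 1 + xn * pd2 m = NN (pd1 m) * max D 1 + xp * pd2 m \<longleftrightarrow>
     int (PP (pd1 m) * max D 1 + xn * pd2 m) = int (NN (pd1 m) * max D 1 + xp * pd2 m)"
    by (simp only: of_nat_eq_iff)
  also have "\<dots> \<longleftrightarrow> int_decode (pd1 m) * int (max D 1) = (int xp - int xn) * int (pd2 m)"
    unfolding int_decode_PN by (simp add: algebra_simps)
  finally show ?thesis unfolding normQ_def by simp
qed

lemma prod_encode_mono: "a \<le> a' \<Longrightarrow> b \<le> b' \<Longrightarrow> prod_encode (a, b) \<le> prod_encode (a', b')"
  unfolding prod_encode_def using triangle_mono[of "a + b" "a' + b'"] by simp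

lemma int_encode_mono: "(c::int) \<ge> 1 \<Longrightarrow> int_encode p \<le> int_encode (p * c)"
proof (cases "p \<ge> 0")
  case True
  assume c: "c \<ge> 1"
  have "p \<le> p * c" using True c by (simp add: mult_le_cancel_left1)
  moreover have "0 \<le> p * c" using True c by simp
  ultimately show ?thesis using True by (simp add: int_encode_def sum_encode_def nat_mono)
next
  case False
  assume c: "c \<ge> 1"
  have "p * c \<le> p" using False c by (simp add: mult_le_cancel_left2)
  then have "nat (- p - 1) \<le> nat (- (p * c) - 1)" by (intro nat_mono) linarith
  moreover have "p * c < 0" using False c by (simp add: mult_neg_pos)
  ultimately show ?thesis using False by (simp add: int_encode_def sum_encode_def)
qed

lemma normq_correct:
  "normq xp xn D = enc_rat (Fract (int xp - int xn) (int (max D 1)))"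
proof -
  define q where "q = Fract (int xp - int xn) (int (max D 1))"
  obtain p d where pd: "quotient_of q = (p, d)" by (cases "quotient_of q")
  have dpos: "d > 0" using quotient_of_denom_pos[OF pd] .
  have cop: "coprime p d" using quotient_of_coprime[OF pd] .
  have qpd: "q = Fract p d" using quotient_of_div[OF pd] by (simp add: Fract_of_int_quotient)
  have Dpos: "int (max D 1) > 0" by simp
  have qeq: "p * int (max D 1) = (int xp - int xn) * d"
    using qpd q_def dpos Dpos by (simp add: eq_rat)
  define m0 where "m0 = prod_encode (int_encode p, nat d)"
  have Q0: "normQ xp xn D m0"
    unfolding normQ_int m0_def using dpos qeq by simp
  have min: "m0 \<le> m" if Qm: "normQ xp xn D m" for m
  proof -
    let ?k = "int_decode (pd1 m)" and ?e = "int (pd2 m)"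
    have epos: "?e > 0" and keq: "?k * int (max D 1) = (int xp - int xn) * ?e"
      using Qm unfolding normQ_int by auto
    have "Fract ?k ?e = q" using epos Dpos keq unfolding q_def by (simp add: eq_rat)
    then have "Fract ?k ?e = Fract p d" using qpd by simp
    then have kd: "?k * d = p * ?e" using epos dpos by (simp add: eq_rat)
    have "d dvd p * ?e" using kd by (metis dvd_triv_right)
    then have "d dvd ?e" using cop by (metis coprime_commute coprime_dvd_mult_right_iff)
    then obtain c where ec: "?e = d * c" by (auto elim: dvdE)
    have cpos: "c \<ge> 1" using ec epos dpos by (metis int_one_le_iff_zero_less zero_less_mult_pos)
    have kpc: "?k = p * c" using kd ec dpos by (simp add: algebra_simps)
    have "int_encode p \<le> int_encode ?k" using int_encode_mono[OF cpos, of p] kpc by simp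
    then have a: "int_encode p \<le> pd1 m" by simp
    have b: "nat d \<le> pd2 m" using ec cpos dpos
      by (metis mult.right_neutral mult_left_mono nat_int nat_mono order_less_imp_le)
    have "m0 \<le> prod_encode (pd1 m, pd2 m)" unfolding m0_def by (rule prod_encode_mono[OF a b])
    then show ?thesis by (simp add: pd_decode)
  qed
  have "normq xp xn D = m0" unfolding normq_def
    by (rule Least_equality) (rule Q0, rule min)
  also have "m0 = enc_rat q" unfolding m0_def enc_rat_def pd by simp
  finally show ?thesis unfolding q_def .
qed

lemma normQ_ex: "\<exists>m. normQ xp xn D m"
proof -
  define q where "q = Fract (int xp - int xn) (int (max D 1))"
  obtain p d where pd: "quotient_of q = (p, d)" by (cases "quotient_of q")
  have dpos: "d > 0" using quotient_of_denom_pos[OF pd] .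
  have qpd: "q = Fract p d" using quotient_of_div[OF pd] by (simp add: Fract_of_int_quotient)
  have Dpos: "int (max D 1) > 0" by simp
  have qeq: "p * int (max D 1) = (int xp - int xn) * d"
    using qpd q_def dpos Dpos by (simp add: eq_rat)
  have "normQ xp xn D (prod_encode (int_encode p, nat d))"
    unfolding normQ_int using dpos qeq by simp
  then show ?thesis by blast
qed



lemma ind_lemma: "(if (if (a::nat) = 0 then 0 else 1) * (if b = c then 1 else 0) = (0::nat) then 1 else 0) = (if 0 < a \<and> b = c then 0 else (1::nat))" by simp

lemma rf1_normq:
  assumes "rf1 xp" "rf1 xn" "rf1 D"
  shows "rf1 (\<lambda>n. normq (xp n) (xn n) (D n))"
proof -
  let ?MD = "Plus (Ap D Y) (Minus (K 1) (Ap D Y))"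
  let ?e = "ISZ (Times (SG (Ap pd2 X)) (EQ (Plus (Times (Ap PP (Ap pd1 X)) ?MD) (Times (Ap xn Y) (Ap pd2 X)))
                    (Plus (Times (Ap NN (Ap pd1 X)) ?MD) (Times (Ap xp Y) (Ap pd2 X)))))"
  have md: "D n + (1 - D n) = max (D n) 1" for n by simp
  have "rf1 (\<lambda>n. LEAST m. normQ (xp n) (xn n) (D n) m)"
  proof (rule rf1_mu_ev[where e="?e"])
    show "okx ?e" using assms by (simp add: rf1_pd1 rf1_pd2 rf1_PP rf1_NN)
    show "\<exists>m. normQ (xp x) (xn x) (D x) m" for x by (rule normQ_ex)
    show "ev ?e m x = (if normQ (xp x) (xn x) (D x) m then 0 else 1)" for m x
      unfolding normQ_def ev.simps ev_ISZ ev_SG ev_EQ md ind_lemma by (rule refl)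
  qed
  then show ?thesis unfolding normq_def .
qed

lemma rf1_Suc: "rf1 f \<Longrightarrow> rf1 (\<lambda>n. Suc (f n))"
proof -
  assume f: "rf1 f"
  have "rf1 Suc" by (rule rf1_by_ev[where e="Plus X (K 1)"]) simp_all
  then show ?thesis using f by (rule rf1_comp)
qed
lemma rf1_pe: "rf1 f \<Longrightarrow> rf1 g \<Longrightarrow> rf1 (\<lambda>n. prod_encode (f n, g n))"
  using rf1_comp2[OF rf2_pe] .
lemma rf1_add: "rf1 f \<Longrightarrow> rf1 g \<Longrightarrow> rf1 (\<lambda>n. f n + g n)"
  using rf1_comp2[OF rf2_add] .
lemma rf1_mult: "rf1 f \<Longrightarrow> rf1 g \<Longrightarrow> rf1 (\<lambda>n. f n * g n)"
  using rf1_comp2[OF rf2_mult] .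
lemma rf1_minus: "rf1 f \<Longrightarrow> rf1 g \<Longrightarrow> rf1 (\<lambda>n. f n - g n)"
  using rf1_comp2[OF rf2_minus] .
lemma rf1_comp': "rf1 f \<Longrightarrow> rf1 g \<Longrightarrow> rf1 (\<lambda>n. f (g n))" by (rule rf1_comp)

lemma rf1_PPc: "rf1 f \<Longrightarrow> rf1 (\<lambda>n. PP (f n))" by (rule rf1_comp[OF rf1_PP])
lemma rf1_NNc: "rf1 f \<Longrightarrow> rf1 (\<lambda>n. NN (f n))" by (rule rf1_comp[OF rf1_NN])
lemma rf1_pd1c: "rf1 f \<Longrightarrow> rf1 (\<lambda>n. pd1 (f n))" by (rule rf1_comp[OF rf1_pd1])
lemma rf1_pd2c: "rf1 f \<Longrightarrow> rf1 (\<lambda>n. pd2 (f n))" by (rule rf1_comp[OF rf1_pd2])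

lemma rf1_list: "list_all rf1 fs \<Longrightarrow> rf1 (\<lambda>n. list_encode (map (\<lambda>f. f n) fs))"
proof (induction fs)
  case Nil then show ?case using rf1_const[of 0] by simp
next
  case (Cons f fs)
  then show ?case using rf1_Suc[OF rf1_pe[of f "\<lambda>n. list_encode (map (\<lambda>f. f n) fs)"]] by simp
qed

lemma rf1_eqi: "rf1 f \<Longrightarrow> rf1 g \<Longrightarrow> rf1 (\<lambda>n. if f n = g n then 1 else 0)"
  by (rule rf1_by_ev[where e="EQ (Ap f X) (Ap g X)"]) simp_all
lemma rf1_lti: "rf1 f \<Longrightarrow> rf1 g \<Longrightarrow> rf1 (\<lambda>n. if f n < g n then 1 else 0)"
  by (rule rf1_by_ev[where e="LT (Ap f X) (Ap g X)"]) simp_all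

section \<open>Rational codes\<close>

lemma enc_rat_pd1: "quotient_of x = (p, d) \<Longrightarrow> pd1 (enc_rat x) = int_encode p"
  by (simp add: enc_rat_def)
lemma enc_rat_pd2: "quotient_of x = (p, d) \<Longrightarrow> pd2 (enc_rat x) = nat d"
  by (simp add: enc_rat_def)

definition code_sub :: "nat \<Rightarrow> nat \<Rightarrow> nat" where
  "code_sub e1 e2 = normq (PP (pd1 e1) * pd2 e2 + NN (pd1 e2) * pd2 e1)
                         (NN (pd1 e1) * pd2 e2 + PP (pd1 e2) * pd2 e1) (pd2 e1 * pd2 e2)"
definition code_neg :: "nat \<Rightarrow> nat" where
  "code_neg e = normq (NN (pd1 e)) (PP (pd1 e)) (pd2 e)"

lemma quot_parts: "quotient_of x = (p, d) \<Longrightarrow> x = Fract p d \<and> d > 0"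
  using quotient_of_div[of x p d] quotient_of_denom_pos[of x p d] by (simp add: Fract_of_int_quotient)

lemma code_sub_correct: "code_sub (enc_rat x) (enc_rat y) = enc_rat (x - y)"
proof -
  obtain p d where pd: "quotient_of x = (p, d)" by (cases "quotient_of x")
  obtain p' d' where pd': "quotient_of y = (p', d')" by (cases "quotient_of y")
  note X = quot_parts[OF pd] and Y = quot_parts[OF pd']
  have "0 < nat d * nat d'" using X Y by simp
  then have D: "max (nat d * nat d') 1 = nat d * nat d'" by (intro max_absorb1) (simp add: Suc_le_eq)
  have "code_sub (enc_rat x) (enc_rat y) =
      enc_rat (Fract (int (PP (int_encode p) * nat d' + NN (int_encode p') * nat d) -
                      int (NN (int_encode p) * nat d' + PP (int_encode p') * nat d))
                     (int (max (nat d * nat d') 1)))"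
    unfolding code_sub_def enc_rat_pd1[OF pd] enc_rat_pd2[OF pd] enc_rat_pd1[OF pd'] enc_rat_pd2[OF pd'] normq_correct ..
  also have "Fract (int (PP (int_encode p) * nat d' + NN (int_encode p') * nat d) -
                      int (NN (int_encode p) * nat d' + PP (int_encode p') * nat d))
                     (int (max (nat d * nat d') 1)) = Fract (p * d' - p' * d) (d * d')"
  proof -
    have ip: "int (PP (int_encode p)) - int (NN (int_encode p)) = p"
      using int_decode_PN[of "int_encode p"] by simp
    have ip': "int (PP (int_encode p')) - int (NN (int_encode p')) = p'"
      using int_decode_PN[of "int_encode p'"] by simp
    have "int (PP (int_encode p) * nat d' + NN (int_encode p') * nat d) -
                      int (NN (int_encode p) * nat d' + PP (int_encode p') * nat d)
          = (int (PP (int_encode p)) - int (NN (int_encode p))) * d' 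
            - (int (PP (int_encode p')) - int (NN (int_encode p'))) * d"
    proof -
      have "int (nat d) = d" "int (nat d') = d'" using X Y by simp_all
      then show ?thesis by (simp only: of_nat_add of_nat_mult algebra_simps)
    qed
    also have "\<dots> = p * d' - p' * d" using ip ip' by simp
    finally have num: "int (PP (int_encode p) * nat d' + NN (int_encode p') * nat d) -
                      int (NN (int_encode p) * nat d' + PP (int_encode p') * nat d) = p * d' - p' * d" .
    have den: "int (max (nat d * nat d') 1) = d * d'" unfolding D using X Y by simp
    show ?thesis unfolding num den ..
  qed
  also have "Fract (p * d' - p' * d) (d * d') = x - y"
    using X Y by (simp add: diff_rat)
  finally show ?thesis .
qed

lemma code_neg_correct: "code_neg (enc_rat x) = enc_rat (- x)"
proof -
  obtain p d where pd: "quotient_of x = (p, d)" by (cases "quotient_of x")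
  note X = quot_parts[OF pd]
  have "0 < nat d" using X by simp
  then have D: "max (nat d) 1 = nat d" by (intro max_absorb1) (simp add: Suc_le_eq)
  have ip: "int (PP (int_encode p)) - int (NN (int_encode p)) = p"
    using int_decode_PN[of "int_encode p"] by simp
  have "code_neg (enc_rat x) = enc_rat (Fract (int (NN (int_encode p)) - int (PP (int_encode p))) (int (max (nat d) 1)))"
    unfolding code_neg_def enc_rat_pd1[OF pd] enc_rat_pd2[OF pd] normq_correct ..
  also have "\<dots> = enc_rat (Fract (- p) d)" using ip D X by (simp add: algebra_simps)
  also have "Fract (- p) d = - x" using X by simp
  finally show ?thesis .
qed

lemma rf1_code_sub: "rf1 f \<Longrightarrow> rf1 g \<Longrightarrow> rf1 (\<lambda>n. code_sub (f n) (g n))"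
  unfolding code_sub_def
  by (intro rf1_normq rf1_add rf1_mult rf1_PPc rf1_NNc rf1_pd1c rf1_pd2c)
lemma rf1_code_neg: "rf1 f \<Longrightarrow> rf1 (\<lambda>n. code_neg (f n))"
  unfolding code_neg_def
  by (intro rf1_normq rf1_PPc rf1_NNc rf1_pd1c rf1_pd2c)

definition valid_rat :: "nat \<Rightarrow> bool" where
  "valid_rat e \<longleftrightarrow> 0 < pd2 e \<and> normq (PP (pd1 e)) (NN (pd1 e)) (pd2 e) = e"

lemma valid_rat_iff: "valid_rat e \<longleftrightarrow> (\<exists>q. e = enc_rat q)"
proof
  assume "valid_rat e"
  then show "\<exists>q. e = enc_rat q" unfolding valid_rat_def normq_correct by metis
next
  assume "\<exists>q. e = enc_rat q"
  then obtain x where e: "e = enc_rat x" by blast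
  obtain p d where pd: "quotient_of x = (p, d)" by (cases "quotient_of x")
  note X = quot_parts[OF pd]
  have ip: "int (PP (int_encode p)) - int (NN (int_encode p)) = p"
    using int_decode_PN[of "int_encode p"] by simp
  have "0 < nat d" using X by simp
  then have D: "max (nat d) 1 = nat d" by (intro max_absorb1) (simp add: Suc_le_eq)
  have "normq (PP (pd1 e)) (NN (pd1 e)) (pd2 e) = enc_rat (Fract p d)"
    unfolding e enc_rat_pd1[OF pd] enc_rat_pd2[OF pd] normq_correct using ip D X by simp
  moreover have "0 < pd2 e" unfolding e enc_rat_pd2[OF pd] using X by simp
  moreover have "enc_rat (Fract p d) = e" using X e by metis
  ultimately show "valid_rat e" unfolding valid_rat_def by simp
qed

lemma rf1_valid_rat: "rf1 f \<Longrightarrow> rf1 (\<lambda>n. if valid_rat (f n) then 1 else 0)"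
proof -
  assume f: "rf1 f"
  have "rf1 (\<lambda>n. (if 0 < pd2 (f n) then 1 else 0) * 
     (if normq (PP (pd1 (f n))) (NN (pd1 (f n))) (pd2 (f n)) = f n then 1 else 0))"
    by (intro rf1_mult rf1_lti rf1_eqi rf1_const f rf1_normq rf1_PPc rf1_NNc rf1_pd1c rf1_pd2c)
  moreover have "(\<lambda>n. (if 0 < pd2 (f n) then 1 else 0) * 
     (if normq (PP (pd1 (f n))) (NN (pd1 (f n))) (pd2 (f n)) = f n then 1 else 0)) = 
     (\<lambda>n. if valid_rat (f n) then 1 else (0::nat))"
    by (auto simp: valid_rat_def)
  ultimately show ?thesis by simp
qed



definition "dR1 n = pd2 (n - 1)"
definition "dR2 n = pd2 (dR1 n - 1)"
definition "dR3 n = pd2 (dR2 n - 1)"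
definition "dE1 n = pd1 (n - 1)"
definition "dE2 n = pd1 (dR1 n - 1)"
definition "dE3 n = pd1 (dR2 n - 1)"
definition "dE4 n = pd1 (dR3 n - 1)"

lemma dec_enc: "dE1 (list_encode [a, b, c, d]) = a" "dE2 (list_encode [a, b, c, d]) = b"
  "dE3 (list_encode [a, b, c, d]) = c" "dE4 (list_encode [a, b, c, d]) = d"
  by (simp_all add: dE1_def dE2_def dE3_def dE4_def dR1_def dR2_def dR3_def)

lemma rf1_pred: "rf1 f \<Longrightarrow> rf1 (\<lambda>n. f n - 1)" by (intro rf1_minus rf1_const)

lemma rf1_dec: "rf1 dE1" "rf1 dE2" "rf1 dE3" "rf1 dE4"
proof -
  have r1: "rf1 dR1" unfolding dR1_def by (intro rf1_pd2c rf1_pred rf1_id)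
  have r2: "rf1 dR2" unfolding dR2_def by (intro rf1_pd2c rf1_pred r1)
  have r3: "rf1 dR3" unfolding dR3_def by (intro rf1_pd2c rf1_pred r2)
  show "rf1 dE1" unfolding dE1_def by (intro rf1_pd1c rf1_pred rf1_id)
  show "rf1 dE2" unfolding dE2_def by (intro rf1_pd1c rf1_pred r1)
  show "rf1 dE3" unfolding dE3_def by (intro rf1_pd1c rf1_pred r2)
  show "rf1 dE4" unfolding dE4_def by (intro rf1_pd1c rf1_pred r3)
qed

definition valid :: "nat \<Rightarrow> bool" where
  "valid n \<longleftrightarrow> n = list_encode [dE1 n, dE2 n, dE3 n, dE4 n] \<and>
     valid_rat (dE1 n) \<and> valid_rat (dE2 n) \<and> valid_rat (dE3 n) \<and> valid_rat (dE4 n) \<and>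
     0 < PP (pd1 (dE1 n)) \<and> PP (pd1 (dE1 n)) < pd2 (dE1 n)"

lemma PP_int_encode: "0 \<le> p \<Longrightarrow> PP (int_encode p) = nat p" "p < 0 \<Longrightarrow> PP (int_encode p) = 0"
  by (simp_all add: PP_def int_encode_def sum_encode_def)

lemma lam_check: "(0 < PP (pd1 (enc_rat x)) \<and> PP (pd1 (enc_rat x)) < pd2 (enc_rat x)) \<longleftrightarrow> 0 < x \<and> x < 1"
proof -
  obtain p d where pd: "quotient_of x = (p, d)" by (cases "quotient_of x")
  note X = quot_parts[OF pd]
  show ?thesis
  proof (cases "0 \<le> p")
    case True
    then show ?thesis unfolding enc_rat_pd1[OF pd] enc_rat_pd2[OF pd] PP_int_encode(1)[OF True]
      using X zero_less_Fract_iff[of d p] Fract_less_one_iff[of d p] by auto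
  next
    case False
    then have "p < 0" by simp
    then show ?thesis unfolding enc_rat_pd1[OF pd] enc_rat_pd2[OF pd] PP_int_encode(2)[OF \<open>p < 0\<close>]
      using X zero_less_Fract_iff[of d p] by auto
  qed
qed

lemma valid_iff: "valid n \<longleftrightarrow> (\<exists>lam t a b. n = enc_tds lam t a b \<and> 0 < lam \<and> lam < 1)"
proof
  assume v: "valid n"
  then obtain lam t a b where e: "dE1 n = enc_rat lam" "dE2 n = enc_rat t" "dE3 n = enc_rat a"
    "dE4 n = enc_rat b" unfolding valid_def valid_rat_iff by blast
  have "n = enc_tds lam t a b" using v e unfolding valid_def enc_tds_def by simp
  moreover have "0 < lam \<and> lam < 1" using v e(1) lam_check[of lam] unfolding valid_def by simp
  ultimately show "\<exists>lam t a b. n = enc_tds lam t a b \<and> 0 < lam \<and> lam < 1" by blast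
next
  assume "\<exists>lam t a b. n = enc_tds lam t a b \<and> 0 < lam \<and> lam < 1"
  then obtain lam t a b where n: "n = enc_tds lam t a b" and l: "0 < lam" "lam < 1" by blast
  show "valid n" unfolding valid_def n enc_tds_def dec_enc valid_rat_iff using lam_check[of lam] l
    by auto
qed

lemma valid_dec: "n = enc_tds lam t a b \<Longrightarrow> dE1 n = enc_rat lam \<and> dE2 n = enc_rat t \<and> dE3 n = enc_rat a \<and> dE4 n = enc_rat b"
  by (simp only: enc_tds_def dec_enc)

lemma rf1_valid: "rf1 (\<lambda>n. if valid n then 1 else 0)"
proof -
  have "rf1 (\<lambda>n. (if n = list_encode [dE1 n, dE2 n, dE3 n, dE4 n] then 1 else 0) *
     ((if valid_rat (dE1 n) then 1 else 0) * ((if valid_rat (dE2 n) then 1 else 0) *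
     ((if valid_rat (dE3 n) then 1 else 0) * ((if valid_rat (dE4 n) then 1 else 0) *
     ((if 0 < PP (pd1 (dE1 n)) then 1 else 0) * (if PP (pd1 (dE1 n)) < pd2 (dE1 n) then 1 else 0)))))))"
  proof (intro rf1_mult rf1_eqi rf1_valid_rat rf1_lti rf1_const rf1_PPc rf1_pd1c rf1_pd2c rf1_dec rf1_id)
    have "rf1 (\<lambda>n. list_encode (map (\<lambda>f. f n) [dE1, dE2, dE3, dE4]))"
      by (rule rf1_list) (simp add: rf1_dec)
    then show "rf1 (\<lambda>n. list_encode [dE1 n, dE2 n, dE3 n, dE4 n])" by simp
  qed
  moreover have "(\<lambda>n. (if n = list_encode [dE1 n, dE2 n, dE3 n, dE4 n] then 1 else 0) *
     ((if valid_rat (dE1 n) then 1 else 0) * ((if valid_rat (dE2 n) then 1 else 0) *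
     ((if valid_rat (dE3 n) then 1 else 0) * ((if valid_rat (dE4 n) then 1 else 0) *
     ((if 0 < PP (pd1 (dE1 n)) then 1 else 0) * (if PP (pd1 (dE1 n)) < pd2 (dE1 n) then 1 else 0)))))))
     = (\<lambda>n. if valid n then 1 else (0::nat))"
    by (auto simp: valid_def)
  ultimately show ?thesis by simp
qed

section \<open>The automata\<close>

definition autA :: "rat \<Rightarrow> rat \<Rightarrow> rat \<Rightarrow> rat \<Rightarrow> dsa" where
  "autA lam t a b = \<lparr>nstates = 3, nletters = 2, init = 0,
     trans = [((0, 0, 1), a - t), ((0, 1, 1), b - t), ((0, 0, 2), t - a), ((0, 1, 2), t - b),
              ((1, 0, 1), a), ((1, 1, 1), b), ((2, 0, 2), - a), ((2, 1, 2), - b)],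
     disc = lam\<rparr>"

definition autB :: "rat \<Rightarrow> dsa" where
  "autB lam = \<lparr>nstates = 1, nletters = 2, init = 0,
     trans = [((0, 0, 0), 0), ((0, 1, 0), 0)], disc = lam\<rparr>"

definition codeA :: "nat \<Rightarrow> nat" where
  "codeA n = list_encode [3, 2, 0, list_encode [
      list_encode [0, 0, 1, code_sub (dE3 n) (dE2 n)], list_encode [0, 1, 1, code_sub (dE4 n) (dE2 n)],
      list_encode [0, 0, 2, code_sub (dE2 n) (dE3 n)], list_encode [0, 1, 2, code_sub (dE2 n) (dE4 n)],
      list_encode [1, 0, 1, dE3 n], list_encode [1, 1, 1, dE4 n],
      list_encode [2, 0, 2, code_neg (dE3 n)], list_encode [2, 1, 2, code_neg (dE4 n)]], dE1 n]"

definition codeB :: "nat \<Rightarrow> nat" where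
  "codeB n = list_encode [1, 2, 0, list_encode [
      list_encode [0, 0, 0, prod_encode (0, 1)], list_encode [0, 1, 0, prod_encode (0, 1)]], dE1 n]"

lemma enc_rat_0: "enc_rat 0 = prod_encode (0, 1)"
  by (simp add: enc_rat_def int_encode_def sum_encode_def)

lemma codeA_correct: "n = enc_tds lam t a b \<Longrightarrow> codeA n = enc_dsa (autA lam t a b)"
  using valid_dec[of n lam t a b]
  by (simp add: codeA_def enc_dsa_def autA_def code_sub_correct code_neg_correct)

lemma codeB_correct: "n = enc_tds lam t a b \<Longrightarrow> codeB n = enc_dsa (autB lam)"
  using valid_dec[of n lam t a b]
  by (simp add: codeB_def enc_dsa_def autB_def enc_rat_0)

lemma rf1_lenc4: "rf1 f1 \<Longrightarrow> rf1 f2 \<Longrightarrow> rf1 f3 \<Longrightarrow> rf1 f4 \<Longrightarrow> rf1 (\<lambda>n. list_encode [f1 n, f2 n, f3 n, f4 n])"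
  using rf1_list[of "[f1, f2, f3, f4]"] by simp
lemma rf1_lenc5: "rf1 f1 \<Longrightarrow> rf1 f2 \<Longrightarrow> rf1 f3 \<Longrightarrow> rf1 f4 \<Longrightarrow> rf1 f5 \<Longrightarrow> rf1 (\<lambda>n. list_encode [f1 n, f2 n, f3 n, f4 n, f5 n])"
  using rf1_list[of "[f1, f2, f3, f4, f5]"] by simp
lemma rf1_lenc2: "rf1 f1 \<Longrightarrow> rf1 f2 \<Longrightarrow> rf1 (\<lambda>n. list_encode [f1 n, f2 n])"
  using rf1_list[of "[f1, f2]"] by simp
lemma rf1_lenc8: "rf1 f1 \<Longrightarrow> rf1 f2 \<Longrightarrow> rf1 f3 \<Longrightarrow> rf1 f4 \<Longrightarrow> rf1 f5 \<Longrightarrow> rf1 f6 \<Longrightarrow> rf1 f7 \<Longrightarrow> rf1 f8 \<Longrightarrow>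
   rf1 (\<lambda>n. list_encode [f1 n, f2 n, f3 n, f4 n, f5 n, f6 n, f7 n, f8 n])"
  using rf1_list[of "[f1, f2, f3, f4, f5, f6, f7, f8]"] by simp

lemma rf1_codeA: "rf1 codeA"
  unfolding codeA_def
  by (intro rf1_lenc5 rf1_lenc8 rf1_lenc4 rf1_const rf1_code_sub rf1_code_neg rf1_dec)
lemma rf1_codeB: "rf1 codeB"
  unfolding codeB_def
  by (intro rf1_lenc5 rf1_lenc2 rf1_lenc4 rf1_const rf1_dec)



lemma enc_rat_inj: "enc_rat x = enc_rat y \<Longrightarrow> x = y"
proof -
  assume e: "enc_rat x = enc_rat y"
  obtain p d where pd: "quotient_of x = (p, d)" by (cases "quotient_of x")
  obtain p' d' where pd': "quotient_of y = (p', d')" by (cases "quotient_of y")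
  have "d > 0" "d' > 0" using quot_parts[OF pd] quot_parts[OF pd'] by auto
  with e pd pd' have "p = p'" "d = d'" by (auto simp: enc_rat_def int_encode_eq)
  then show "x = y" using pd pd' quotient_of_inject by metis
qed

lemma list_encode_inj: "list_encode xs = list_encode ys \<Longrightarrow> xs = ys"
  by (metis list_encode_inverse)

lemma enc_dsa_inj: "enc_dsa A = enc_dsa B \<Longrightarrow> A = B"
proof -
  assume e: "enc_dsa A = enc_dsa B"
  let ?g = "(\<lambda>((p, s, q), c). list_encode [p, s, q, enc_rat c]) :: (nat \<times> nat \<times> nat) \<times> rat \<Rightarrow> nat"
  have l: "[nstates A, nletters A, init A, list_encode (map ?g (trans A)), enc_rat (disc A)] =
           [nstates B, nletters B, init B, list_encode (map ?g (trans B)), enc_rat (disc B)]"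
    using e unfolding enc_dsa_def by (rule list_encode_inj)
  have inj: "inj ?g"
  proof (rule injI)
    fix u v :: "(nat \<times> nat \<times> nat) \<times> rat"
    assume "?g u = ?g v"
    then show "u = v"
      by (cases u; cases v) (auto dest!: list_encode_inj enc_rat_inj)
  qed
  have "map ?g (trans A) = map ?g (trans B)" using l by (auto dest!: list_encode_inj)
  then have t: "trans A = trans B" using inj by (simp add: inj_map_eq_map)
  have d: "disc A = disc B" using l by (auto dest!: enc_rat_inj)
  show "A = B" using l t d by (cases A, cases B) simp
qed

lemma enc_tds_inj: "enc_tds l t a b = enc_tds l' t' a' b' \<Longrightarrow> l = l' \<and> t = t' \<and> a = a' \<and> b = b'"
  unfolding enc_tds_def by (auto dest!: list_encode_inj enc_rat_inj)

lemma wfA: "0 < lam \<Longrightarrow> lam < 1 \<Longrightarrow> wf_dsa (autA lam t a b)"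
  by (simp add: wf_dsa_def autA_def)
lemma wfB: "0 < lam \<Longrightarrow> lam < 1 \<Longrightarrow> wf_dsa (autB lam)"
  by (simp add: wf_dsa_def autB_def)

section \<open>Semantics\<close>

definition Vv :: "rat \<Rightarrow> rat \<Rightarrow> rat \<Rightarrow> (nat \<Rightarrow> nat) \<Rightarrow> real" where
  "Vv lam a b w = (\<Sum>i. real_of_rat lam ^ i * real_of_rat (if w i = 0 then a else b))"

lemma summ_bounded:
  fixes L :: real
  assumes "0 \<le> L" "L < 1" "\<And>i. \<bar>u i\<bar> \<le> M"
  shows "summable (\<lambda>i. L ^ i * u i)"
proof (rule summable_comparison_test[where g="\<lambda>i. M * L ^ i"])
  have "norm (L ^ n * u n) \<le> M * L ^ n" for n
  proof -
    have "norm (L ^ n * u n) = L ^ n * \<bar>u n\<bar>" using assms(1) by (simp add: abs_mult)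
    also have "\<dots> \<le> L ^ n * M" using assms by (intro mult_left_mono) auto
    finally show ?thesis by (simp add: mult.commute)
  qed
  then show "\<exists>N. \<forall>n\<ge>N. norm (L ^ n * u n) \<le> M * L ^ n" by blast
  show "summable (\<lambda>i. M * L ^ i)" using assms by (intro summable_mult summable_geometric) simp
qed

lemma summ_u:
  assumes "0 < lam" "lam < 1"
  shows "summable (\<lambda>i. real_of_rat lam ^ i * real_of_rat (if w i = 0 then a else b))"
proof (rule summ_bounded[where M="\<bar>real_of_rat a\<bar> + \<bar>real_of_rat b\<bar>"])
  show "0 \<le> real_of_rat lam" using assms by simp
  show "real_of_rat lam < 1" using assms by (simp add: of_rat_less_1_iff)
  show "\<bar>real_of_rat (if w i = 0 then a else b)\<bar> \<le> \<bar>real_of_rat a\<bar> + \<bar>real_of_rat b\<bar>" for i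
    by auto
qed

definition "r1 = (\<lambda>i::nat. if i = 0 then 0 else (1::nat))"
definition "r2 = (\<lambda>i::nat. if i = 0 then 0 else (2::nat))"

lemma delta_A: "delta (autA lam t a b) = {(0,0,1), (0,1,1), (0,0,2), (0,1,2), (1,0,1), (1,1,1), (2,0,2), (2,1,2)}"
  by (simp add: delta_def autA_def)

lemma runs_A:
  assumes w: "\<And>i. w i < 2"
  shows "is_run (autA lam t a b) w r \<longleftrightarrow> r = r1 \<or> r = r2"
proof
  assume rr: "r = r1 \<or> r = r2"
  have wi: "w i = 0 \<or> w i = 1" for i using w[of i] by arith
  have init: "init (autA lam t a b) = 0" by (simp add: autA_def)
  have s1: "(r1 i, w i, r1 (Suc i)) \<in> delta (autA lam t a b)" for i
    using wi[of i] unfolding delta_A r1_def by (cases "i = 0") auto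
  have s2: "(r2 i, w i, r2 (Suc i)) \<in> delta (autA lam t a b)" for i
    using wi[of i] unfolding delta_A r2_def by (cases "i = 0") auto
  show "is_run (autA lam t a b) w r"
    using rr s1 s2 init unfolding is_run_def by (auto simp: r1_def r2_def)
next
  assume r: "is_run (autA lam t a b) w r"
  then have r0: "r 0 = 0" and st: "\<And>i. (r i, w i, r (Suc i)) \<in> delta (autA lam t a b)"
    unfolding is_run_def by (auto simp: autA_def)
  have r1c: "r 1 = 1 \<or> r 1 = 2" using st[of 0] r0 unfolding delta_A by auto
  have all: "r (Suc i) = r 1" for i
  proof (induction i)
    case 0 show ?case by simp
  next
    case (Suc i)
    then show ?case using st[of "Suc i"] r1c unfolding delta_A by auto
  qed
  have eq: "r = (\<lambda>i. if i = 0 then 0 else r 1)"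
  proof
    fix i show "r i = (if i = 0 then 0 else r 1)" using r0 all by (cases i) auto
  qed
  from r1c show "r = r1 \<or> r = r2"
  proof
    assume "r 1 = 1"
    then have "r1 = (\<lambda>i. if i = 0 then 0 else r 1)" unfolding r1_def by (simp only:)
    with eq show ?thesis by simp
  next
    assume "r 1 = 2"
    then have "r2 = (\<lambda>i. if i = 0 then 0 else r 1)" unfolding r2_def by (simp only:)
    with eq show ?thesis by simp
  qed
qed

lemma gamma_A:
  assumes "x < 2"
  shows "gamma (autA lam t a b) (0, x, 1) = (if x = 0 then a else b) - t"
    "gamma (autA lam t a b) (0, x, 2) = t - (if x = 0 then a else b)"
    "gamma (autA lam t a b) (1, x, 1) = (if x = 0 then a else b)"
    "gamma (autA lam t a b) (2, x, 2) = - (if x = 0 then a else b)"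
proof -
  have "x = 0 \<or> x = 1" using assms by arith
  then show "gamma (autA lam t a b) (0, x, 1) = (if x = 0 then a else b) - t"
    "gamma (autA lam t a b) (0, x, 2) = t - (if x = 0 then a else b)"
    "gamma (autA lam t a b) (1, x, 1) = (if x = 0 then a else b)"
    "gamma (autA lam t a b) (2, x, 2) = - (if x = 0 then a else b)"
    by (elim disjE; simp add: gamma_def autA_def)+
qed

lemma val_A:
  assumes l: "0 < lam" "lam < 1" and w: "\<And>i. w i < 2"
  shows "dsa_val (autA lam t a b) w = ereal (- \<bar>Vv lam a b w - real_of_rat t\<bar>)"
proof -
  let ?A = "autA lam t a b"
  let ?L = "real_of_rat lam"
  let ?u = "\<lambda>i. real_of_rat (if w i = 0 then a else b)"
  let ?T = "real_of_rat t"
  have su: "summable (\<lambda>i. ?L ^ i * ?u i)" by (rule summ_u[OF l])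
  have sT: "(\<lambda>i. if i = 0 then ?T else 0) sums ?T" using sums_single[of 0 "\<lambda>_. ?T"] by simp
  have disc: "disc ?A = lam" by (simp add: autA_def)
  have v1: "run_value ?A w r1 = Vv lam a b w - ?T"
  proof -
    have "\<And>i. ?L ^ i * real_of_rat (gamma ?A (r1 i, w i, r1 (Suc i))) =
           ?L ^ i * ?u i - (if i = 0 then ?T else 0)"
    proof -
      fix i show "?L ^ i * real_of_rat (gamma ?A (r1 i, w i, r1 (Suc i))) =
           ?L ^ i * ?u i - (if i = 0 then ?T else 0)"
      proof (cases i)
        case 0
        have "gamma ?A (0, w 0, 1) = (if w 0 = 0 then a else b) - t" by (rule gamma_A(1)[OF w])
        then show ?thesis using 0 by (simp add: r1_def of_rat_diff)
      next
        case (Suc j)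
        have "gamma ?A (1, w i, 1) = (if w i = 0 then a else b)" by (rule gamma_A(3)[OF w])
        then show ?thesis using Suc by (simp add: r1_def)
      qed
    qed
    then have "run_value ?A w r1 = (\<Sum>i. ?L ^ i * ?u i - (if i = 0 then ?T else 0))"
      unfolding run_value_def disc by simp
    also have "\<dots> = (\<Sum>i. ?L ^ i * ?u i) - (\<Sum>i. if i = 0 then ?T else 0)"
      using suminf_diff[OF su sums_summable[OF sT]] by simp
    also have "\<dots> = Vv lam a b w - ?T" using sums_unique[OF sT] unfolding Vv_def by simp
    finally show ?thesis .
  qed
  have v2: "run_value ?A w r2 = ?T - Vv lam a b w"
  proof -
    have "\<And>i. ?L ^ i * real_of_rat (gamma ?A (r2 i, w i, r2 (Suc i))) =
           (if i = 0 then ?T else 0) - ?L ^ i * ?u i"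
    proof -
      fix i show "?L ^ i * real_of_rat (gamma ?A (r2 i, w i, r2 (Suc i))) =
           (if i = 0 then ?T else 0) - ?L ^ i * ?u i"
      proof (cases i)
        case 0
        have "gamma ?A (0, w 0, 2) = t - (if w 0 = 0 then a else b)" by (rule gamma_A(2)[OF w])
        then show ?thesis using 0 by (simp add: r2_def of_rat_diff)
      next
        case (Suc j)
        have "gamma ?A (2, w i, 2) = - (if w i = 0 then a else b)" by (rule gamma_A(4)[OF w])
        then show ?thesis using Suc by (simp add: r2_def of_rat_minus)
      qed
    qed
    then have "run_value ?A w r2 = (\<Sum>i. (if i = 0 then ?T else 0) - ?L ^ i * ?u i)"
      unfolding run_value_def disc by simp
    also have "\<dots> = (\<Sum>i. if i = 0 then ?T else 0) - (\<Sum>i. ?L ^ i * ?u i)"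
      using suminf_diff[OF sums_summable[OF sT] su] by simp
    also have "\<dots> = ?T - Vv lam a b w" using sums_unique[OF sT] unfolding Vv_def by simp
    finally show ?thesis .
  qed
  have runs: "{r. is_run ?A w r} = {r1, r2}" using runs_A[OF w] by auto
  have "dsa_val ?A w = min (ereal (run_value ?A w r1)) (ereal (run_value ?A w r2))"
    unfolding dsa_val_def runs by (simp add: inf_min)
  also have "\<dots> = ereal (- \<bar>Vv lam a b w - ?T\<bar>)" unfolding v1 v2 by (simp add: min_def)
  finally show ?thesis .
qed

lemma val_B:
  assumes w: "\<And>i. w i < 2"
  shows "dsa_val (autB lam) w = 0"
proof -
  have d: "delta (autB lam) = {(0,0,0), (0,1,0)}" by (simp add: delta_def autB_def)
  have wi: "w i = 0 \<or> w i = 1" for i using w[of i] by arith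
  have runs: "{r. is_run (autB lam) w r} = {\<lambda>_::nat. 0::nat}"
  proof (intro set_eqI iffI)
    fix r assume "r \<in> {r. is_run (autB lam) w r}"
    then have r0: "r 0 = 0" and st: "\<And>i. (r i, w i, r (Suc i)) \<in> delta (autB lam)"
      unfolding is_run_def by (auto simp: autB_def)
    have "r i = 0" for i using st[of "i - 1"] r0 unfolding d by (cases i) auto
    then show "r \<in> {\<lambda>_::nat. 0::nat}" by auto
  next
    fix r assume "r \<in> {\<lambda>_::nat. (0::nat)}"
    then show "r \<in> {r. is_run (autB lam) w r}"
      unfolding is_run_def d using wi by (auto simp: autB_def)
  qed
  have g: "gamma (autB lam) (0, w i, 0) = 0" for i using wi[of i] by (auto simp: gamma_def autB_def)
  show ?thesis unfolding dsa_val_def runs run_value_def using g by (simp add: zero_ereal_def)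
qed



lemma decidable_rf1: "decidable P \<longleftrightarrow> rf1 (\<lambda>n. if P n then 1 else 0)"
  unfolding decidable_def rf1_def ..

lemma tds_word:
  assumes l: "0 < lam" "lam < 1"
  shows "(\<exists>w :: nat \<Rightarrow> rat. (\<forall>i. w i \<in> {a, b}) \<and>
           (\<lambda>i. real_of_rat (w i) * real_of_rat lam ^ i) sums real_of_rat t) \<longleftrightarrow>
         (\<exists>x. (\<forall>i. x i < (2::nat)) \<and> Vv lam a b x = real_of_rat t)"
proof
  assume "\<exists>w :: nat \<Rightarrow> rat. (\<forall>i. w i \<in> {a, b}) \<and>
           (\<lambda>i. real_of_rat (w i) * real_of_rat lam ^ i) sums real_of_rat t"
  then obtain w :: "nat \<Rightarrow> rat" where wab: "\<And>i. w i \<in> {a, b}"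
    and s: "(\<lambda>i. real_of_rat (w i) * real_of_rat lam ^ i) sums real_of_rat t" by blast
  define x where "x i = (if w i = a then 0 else (1::nat))" for i
  have xw: "(if x i = 0 then a else b) = w i" for i using wab[of i] unfolding x_def by auto
  have "Vv lam a b x = (\<Sum>i. real_of_rat (w i) * real_of_rat lam ^ i)"
    unfolding Vv_def xw by (simp add: mult.commute)
  also have "\<dots> = real_of_rat t" using sums_unique[OF s] by simp
  finally have "Vv lam a b x = real_of_rat t" .
  moreover have "\<forall>i. x i < 2" unfolding x_def by simp
  ultimately show "\<exists>x. (\<forall>i. x i < (2::nat)) \<and> Vv lam a b x = real_of_rat t" by blast
next
  assume "\<exists>x. (\<forall>i. x i < (2::nat)) \<and> Vv lam a b x = real_of_rat t"
  then obtain x :: "nat \<Rightarrow> nat" where v: "Vv lam a b x = real_of_rat t" by blast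
  define w where "w i = (if x i = 0 then a else b)" for i
  have "(\<lambda>i. real_of_rat lam ^ i * real_of_rat (if x i = 0 then a else b)) sums Vv lam a b x"
    unfolding Vv_def by (rule summable_sums[OF summ_u[OF l]])
  then have "(\<lambda>i. real_of_rat (w i) * real_of_rat lam ^ i) sums real_of_rat t"
    unfolding w_def v by (simp add: mult.commute)
  moreover have "\<forall>i. w i \<in> {a, b}" unfolding w_def by simp
  ultimately show "\<exists>w :: nat \<Rightarrow> rat. (\<forall>i. w i \<in> {a, b}) \<and>
           (\<lambda>i. real_of_rat (w i) * real_of_rat lam ^ i) sums real_of_rat t" by blast
qed

lemma TDS_iff:
  assumes n: "n = enc_tds lam t a b" and l: "0 < lam" "lam < 1"
  shows "TDS n \<longleftrightarrow> (\<exists>x. (\<forall>i. x i < (2::nat)) \<and> Vv lam a b x = real_of_rat t)"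
proof -
  have "TDS n \<longleftrightarrow> (\<exists>w :: nat \<Rightarrow> rat. (\<forall>i. w i \<in> {a, b}) \<and>
           (\<lambda>i. real_of_rat (w i) * real_of_rat lam ^ i) sums real_of_rat t)"
    unfolding TDS_def using n l by (auto dest: enc_tds_inj) blast
  then show ?thesis using tds_word[OF l] by simp
qed

lemma is_word_A: "is_word (autA lam t a b) w \<longleftrightarrow> (\<forall>i. w i < 2)"
  by (simp add: is_word_def autA_def)

lemma valA_less:
  assumes l: "0 < lam" "lam < 1" and w: "\<forall>i. w i < 2"
  shows "dsa_val (autA lam t a b) w < ereal 0 \<longleftrightarrow> Vv lam a b w \<noteq> real_of_rat t"
  using val_A[OF l, of w t a b] w by auto

lemma UNIV_iff:
  assumes n: "n = enc_tds lam t a b" and l: "0 < lam" "lam < 1"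
  shows "LT_UNIV (prod_encode (codeA n, prod_encode (0, 1))) \<longleftrightarrow>
    (\<forall>x. (\<forall>i. x i < (2::nat)) \<longrightarrow> Vv lam a b x \<noteq> real_of_rat t)"
proof -
  let ?A = "autA lam t a b"
  have c: "prod_encode (codeA n, prod_encode (0, 1)) = prod_encode (enc_dsa ?A, enc_rat 0)"
    using codeA_correct[OF n] enc_rat_0 by simp
  have "LT_UNIV (prod_encode (codeA n, prod_encode (0, 1))) \<longleftrightarrow>
        (\<forall>w. is_word ?A w \<longrightarrow> dsa_val ?A w < ereal (real_of_rat 0))"
  proof
    assume "LT_UNIV (prod_encode (codeA n, prod_encode (0, 1)))"
    then obtain A' t' where "prod_encode (enc_dsa ?A, enc_rat 0) = prod_encode (enc_dsa A', enc_rat t')"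
      and H: "\<forall>w. is_word A' w \<longrightarrow> dsa_val A' w < ereal (real_of_rat t')"
      unfolding LT_UNIV_def c by blast
    then have "A' = ?A" "t' = 0" by (auto dest!: enc_dsa_inj enc_rat_inj)
    with H show "\<forall>w. is_word ?A w \<longrightarrow> dsa_val ?A w < ereal (real_of_rat 0)" by simp
  next
    assume H: "\<forall>w. is_word ?A w \<longrightarrow> dsa_val ?A w < ereal (real_of_rat 0)"
    show "LT_UNIV (prod_encode (codeA n, prod_encode (0, 1)))"
      unfolding LT_UNIV_def c using wfA[OF l, of t a b] H
      by (intro exI[of _ "autA lam t a b"] exI[of _ "0::rat"]) simp
  qed
  also have "\<dots> \<longleftrightarrow> (\<forall>x. (\<forall>i. x i < (2::nat)) \<longrightarrow> Vv lam a b x \<noteq> real_of_rat t)"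
    using valA_less[OF l] is_word_A by auto
  finally show ?thesis .
qed

lemma INCL_iff:
  assumes n: "n = enc_tds lam t a b" and l: "0 < lam" "lam < 1"
  shows "LT_INCL (prod_encode (codeA n, codeB n)) \<longleftrightarrow>
    (\<forall>x. (\<forall>i. x i < (2::nat)) \<longrightarrow> Vv lam a b x \<noteq> real_of_rat t)"
proof -
  let ?A = "autA lam t a b" and ?B = "autB lam"
  have c: "prod_encode (codeA n, codeB n) = prod_encode (enc_dsa ?A, enc_dsa ?B)"
    using codeA_correct[OF n] codeB_correct[OF n] by simp
  have nl: "nletters ?A = nletters ?B" by (simp add: autA_def autB_def)
  have "LT_INCL (prod_encode (codeA n, codeB n)) \<longleftrightarrow>
        (\<forall>w. is_word ?A w \<longrightarrow> dsa_val ?A w < dsa_val ?B w)"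
    unfolding LT_INCL_def c using wfA[OF l, of t a b] wfB[OF l] nl
    by (auto dest!: enc_dsa_inj)
  also have "\<dots> \<longleftrightarrow> (\<forall>w. is_word ?A w \<longrightarrow> dsa_val ?A w < ereal 0)"
    using val_B is_word_A by (auto simp: zero_ereal_def)
  also have "\<dots> \<longleftrightarrow> (\<forall>x. (\<forall>i. x i < (2::nat)) \<longrightarrow> Vv lam a b x \<noteq> real_of_rat t)"
    using valA_less[OF l] is_word_A by auto
  finally show ?thesis .
qed

lemma reduction:
  assumes G: "rf1 (\<lambda>n. if Q n then 1 else 0)" and cf: "rf1 cf"
    and red: "\<And>n lam t a b. n = enc_tds lam t a b \<Longrightarrow> 0 < lam \<Longrightarrow> lam < 1 \<Longrightarrow>
       (Q (cf n) \<longleftrightarrow> (\<forall>x. (\<forall>i. x i < (2::nat)) \<longrightarrow> Vv lam a b x \<noteq> real_of_rat t))"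
  shows "decidable TDS"
proof -
  have "rf1 (\<lambda>n. (if valid n then 1 else 0) * (1 - (if Q (cf n) then 1 else 0)))"
    by (intro rf1_mult rf1_valid rf1_minus rf1_const rf1_comp[OF G cf])
  moreover have "(\<lambda>n. (if valid n then 1 else 0) * (1 - (if Q (cf n) then 1 else 0))) =
                 (\<lambda>n. if TDS n then 1 else (0::nat))"
  proof
    fix n
    show "(if valid n then 1 else 0) * (1 - (if Q (cf n) then 1 else 0)) = (if TDS n then 1 else (0::nat))"
    proof (cases "valid n")
      case True
      then obtain lam t a b where n: "n = enc_tds lam t a b" and l: "0 < lam" "lam < 1"
        unfolding valid_iff by blast
      show ?thesis using True TDS_iff[OF n l] red[OF n l] by auto
    next
      case False
      then have "\<not> TDS n" unfolding valid_iff TDS_def by blast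
      with False show ?thesis by simp
    qed
  qed
  ultimately show ?thesis unfolding decidable_rf1 by simp
qed

theorem theorem29:
  assumes "\<not> decidable TDS"
  shows "\<not> decidable LT_UNIV \<and> \<not> decidable LT_INCL"
proof
  show "\<not> decidable LT_UNIV"
  proof
    assume "decidable LT_UNIV"
    then have G: "rf1 (\<lambda>n. if LT_UNIV n then 1 else 0)" unfolding decidable_rf1 .
    have cf: "rf1 (\<lambda>n. prod_encode (codeA n, prod_encode (0, 1)))"
      by (intro rf1_pe rf1_codeA rf1_const)
    have "decidable TDS"
      by (rule reduction[OF G cf]) (rule UNIV_iff)
    with assms show False by simp
  qed
  show "\<not> decidable LT_INCL"
  proof
    assume "decidable LT_INCL"
    then have G: "rf1 (\<lambda>n. if LT_INCL n then 1 else 0)" unfolding decidable_rf1 .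
    have cf: "rf1 (\<lambda>n. prod_encode (codeA n, codeB n))"
      by (intro rf1_pe rf1_codeA rf1_codeB)
    have "decidable TDS"
      by (rule reduction[OF G cf]) (rule INCL_iff)
    with assms show False by simp
  qed
qed


end
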